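(* Let \((Q, \preccurlyeq_{Q})\) be a totally ordered set having a smallest element and satisfying \(|Q| > 1\). Then the following conditions are equivalent. (i) The order topology of \((Q,\preccurlyeq_Q)\) is separable. (ii) For every \(\preccurlyeq_{Q}\)-pseudoultrametric \(d\) there is a \(\preccurlyeq_{\mathbb{R}_{0}}\)-pseudoultrametric \(\rho\) such that \(d\) and \(\rho\) are weakly similar. (iii) For every \(\preccurlyeq_{Q}\)-pseudoultrametric \(d\) there is a \(\preccurlyeq_{\mathbb{R}_{0}}\)-pseudoultrametric \(\rho\) such that \(d\) and \(\rho\) are combinatorially similar.
   Context: \(\mathbb{R}_0:=[0,\infty)\times\{0,1\}\) with the lexicographic linear order: \(\langle a,b\rangle\preccurlyeq_{\mathbb{R}_0}\langle c,e\rangle\) iff \(a<c\), or \(a=c\) and \(b\le e\); its smallest element is \(\langle 0,0\rangle\). The order topology on a totally ordered \((Q,\preccurlyeq_Q)\) is the topology with subbase consisting of all sets \(\{q: q\prec_Q a\}\) and \(\{q: a\prec_Q q\}\), \(a\in Q\); a space is separable if it has a countable subset meeting every nonempty open set. For a poset \((P,\preccurlyeq_P)\) with smallest element \(p_0\), \(d\colon X^2\to P\) (\(X\) nonempty) is a \(\preccurlyeq_P\)-pseudoultrametric if \(d\) is symmetric, \(d(x,x)=p_0\) for all \(x\), and for every triple \(\langle x_1,x_2,x_3\rangle\) in \(X\) there is a permutation \((i_1,i_2,i_3)\) of \((1,2,3)\) with \(d(x_{i_1},x_{i_3})\preccurlyeq_P d(x_{i_1},x_{i_2})=d(x_{i_2},x_{i_3})\).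 For a \(\preccurlyeq_Q\)-pseudoultrametric \(d\) on \(X\) and a \(\preccurlyeq_{\mathbb{R}_0}\)-pseudoultrametric \(\rho\) on \(Y\): they are combinatorially similar if there are bijections \(h\colon X\to Y\), \(f\colon d(X^2)\to\rho(Y^2)\) with \(\rho(h(x),h(y))=f(d(x,y))\) for all \(x,y\in X\); they are weakly similar if this holds with \(f\) an order isomorphism between the subposets \(d(X^2)\subseteq Q\) and \(\rho(Y^2)\subseteq\mathbb{R}_0\). *)

theory Defs
  imports "HOL-Analysis.Analysis"
begin

text \<open>The totally ordered set R_0 = [0,oo) x {0,1}, with {0,1} rendered as bool (False < True),
  and its lexicographic order.\<close>

definition R0 :: "(real \<times> bool) set" where
  "R0 = {p. fst p \<ge> 0}"

definition le_R0 :: "real \<times> bool \<Rightarrow> real \<times> bool \<Rightarrow> bool" where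
  "le_R0 p q \<longleftrightarrow> fst p < fst q \<or> (fst p = fst q \<and> snd p \<le> snd q)"

definition order_topology_of :: "'a::linorder topology" where
  "order_topology_of = topology_generated_by ({{q. q < a} | a. True} \<union> {{q. a < q} | a. True})"

definition separable_topology :: "'a topology \<Rightarrow> bool" where
  "separable_topology T \<longleftrightarrow>
     (\<exists>D. countable D \<and> D \<subseteq> topspace T \<and> (\<forall>U. openin T U \<and> U \<noteq> {} \<longrightarrow> D \<inter> U \<noteq> {}))"

definition pseudoultrametric ::
  "('p \<Rightarrow> 'p \<Rightarrow> bool) \<Rightarrow> 'p set \<Rightarrow> 'x set \<Rightarrow> ('x \<Rightarrow> 'x \<Rightarrow> 'p) \<Rightarrow> bool" where
  "pseudoultrametric le P X d \<longleftrightarrow>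
     X \<noteq> {} \<and>
     (\<forall>x\<in>X. \<forall>y\<in>X. d x y \<in> P) \<and>
     (\<forall>x\<in>X. \<forall>y\<in>X. d x y = d y x) \<and>
     (\<forall>x\<in>X. \<forall>p\<in>P. le (d x x) p) \<and>
     (\<forall>x1\<in>X. \<forall>x2\<in>X. \<forall>x3\<in>X.
        (le (d x1 x3) (d x1 x2) \<and> d x1 x2 = d x2 x3) \<or>
        (le (d x1 x2) (d x1 x3) \<and> d x1 x3 = d x3 x2) \<or>
        (le (d x2 x3) (d x2 x1) \<and> d x2 x1 = d x1 x3) \<or>
        (le (d x2 x1) (d x2 x3) \<and> d x2 x3 = d x3 x1) \<or>
        (le (d x3 x2) (d x3 x1) \<and> d x3 x1 = d x1 x2) \<or>
        (le (d x3 x1) (d x3 x2) \<and> d x3 x2 = d x2 x1))"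

definition comb_similar ::
  "'x set \<Rightarrow> ('x \<Rightarrow> 'x \<Rightarrow> 'q) \<Rightarrow> 'y set \<Rightarrow> ('y \<Rightarrow> 'y \<Rightarrow> 'r) \<Rightarrow> bool" where
  "comb_similar X d Y \<rho> \<longleftrightarrow>
     (\<exists>h f. bij_betw h X Y \<and>
            bij_betw f ((\<lambda>(x, y). d x y) ` (X \<times> X)) ((\<lambda>(x, y). \<rho> x y) ` (Y \<times> Y)) \<and>
            (\<forall>x\<in>X. \<forall>y\<in>X. \<rho> (h x) (h y) = f (d x y)))"

definition weak_similar ::
  "'x set \<Rightarrow> ('x \<Rightarrow> 'x \<Rightarrow> 'q::order) \<Rightarrow> 'y set \<Rightarrow> ('y \<Rightarrow> 'y \<Rightarrow> real \<times> bool) \<Rightarrow> bool" where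
  "weak_similar X d Y \<rho> \<longleftrightarrow>
     (\<exists>h f. bij_betw h X Y \<and>
            bij_betw f ((\<lambda>(x, y). d x y) ` (X \<times> X)) ((\<lambda>(x, y). \<rho> x y) ` (Y \<times> Y)) \<and>
            (\<forall>a\<in>(\<lambda>(x, y). d x y) ` (X \<times> X). \<forall>b\<in>(\<lambda>(x, y). d x y) ` (X \<times> X).
               a \<le> b \<longleftrightarrow> le_R0 (f a) (f b)) \<and>
            (\<forall>x\<in>X. \<forall>y\<in>X. \<rho> (h x) (h y) = f (d x y)))"

text \<open>Conditions (ii) and (iii), for pseudoultrametric spaces whose points live in type 'x.\<close>

definition cond_weak :: "'x itself \<Rightarrow> 'q::linorder itself \<Rightarrow> bool" where
  "cond_weak _ _ \<longleftrightarrow>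
     (\<forall>(X::'x set) (d::'x \<Rightarrow> 'x \<Rightarrow> 'q). pseudoultrametric (\<le>) UNIV X d \<longrightarrow>
        (\<exists>(Y::'x set) \<rho>. pseudoultrametric le_R0 R0 Y \<rho> \<and> weak_similar X d Y \<rho>))"

definition cond_comb :: "'x itself \<Rightarrow> 'q::linorder itself \<Rightarrow> bool" where
  "cond_comb _ _ \<longleftrightarrow>
     (\<forall>(X::'x set) (d::'x \<Rightarrow> 'x \<Rightarrow> 'q). pseudoultrametric (\<le>) UNIV X d \<longrightarrow>
        (\<exists>(Y::'x set) \<rho>. pseudoultrametric le_R0 R0 Y \<rho> \<and> comb_similar X d Y \<rho>))"

end

theory Submission imports Defs begin
definition Iv :: "'a::linorder set \<Rightarrow> 'a set \<Rightarrow> 'a set" where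
  "Iv Lo Hi = {y. (\<forall>a\<in>Lo. a < y) \<and> (\<forall>b\<in>Hi. y < b)}"

lemma Iv_Un: "Iv (Lo1 \<union> Lo2) (Hi1 \<union> Hi2) = Iv Lo1 Hi1 \<inter> Iv Lo2 Hi2"
  unfolding Iv_def by blast

lemma K3:
  assumes "generate_topology_on ({{q. q < a} | a. True} \<union> {{q. a < q} | a. True}) U" "(x::'a::linorder) \<in> U"
  shows "\<exists>Lo Hi. finite Lo \<and> finite Hi \<and> x \<in> Iv Lo Hi \<and> Iv Lo Hi \<subseteq> U"
  using assms
proof (induction arbitrary: x)
  case Empty
  then show ?case by simp
next
  case (Int a b)
  from Int.prems have xa: "x \<in> a" and xb: "x \<in> b" by auto
  obtain Lo1 Hi1 where 1: "finite Lo1" "finite Hi1" "x \<in> Iv Lo1 Hi1" "Iv Lo1 Hi1 \<subseteq> a"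
    using Int.IH(1)[OF xa] by blast
  obtain Lo2 Hi2 where 2: "finite Lo2" "finite Hi2" "x \<in> Iv Lo2 Hi2" "Iv Lo2 Hi2 \<subseteq> b"
    using Int.IH(2)[OF xb] by blast
  have "finite (Lo1 \<union> Lo2)" "finite (Hi1 \<union> Hi2)" using 1 2 by simp_all
  moreover have "x \<in> Iv (Lo1 \<union> Lo2) (Hi1 \<union> Hi2)" using 1(3) 2(3) unfolding Iv_Un by blast
  moreover have "Iv (Lo1 \<union> Lo2) (Hi1 \<union> Hi2) \<subseteq> a \<inter> b" using 1(4) 2(4) unfolding Iv_Un by blast
  ultimately show ?case by blast
next
  case (UN K)
  from UN.prems obtain k where "k \<in> K" "x \<in> k" by blast
  then obtain Lo Hi where "finite Lo" "finite Hi" "x \<in> Iv Lo Hi" "Iv Lo Hi \<subseteq> k" using UN.IH[OF \<open>k \<in> K\<close> \<open>x \<in> k\<close>] by blast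
  then show ?case using \<open>k \<in> K\<close> by blast
next
  case (Basis s)
  then obtain a where "s = {q. q < a} \<or> s = {q. a < q}" by blast
  then show ?case
  proof
    assume s: "s = {q. q < a}"
    have "x \<in> Iv {} {a}" "Iv {} {a} \<subseteq> s" using Basis.prems s unfolding Iv_def by auto
    then show ?thesis by blast
  next
    assume s: "s = {q. a < q}"
    have "x \<in> Iv {a} {}" "Iv {a} {} \<subseteq> s" using Basis.prems s unfolding Iv_def by auto
    then show ?thesis by blast
  qed
qed

lemma subsingleton_finite: "(\<And>a b. a \<in> A \<Longrightarrow> b \<in> A \<Longrightarrow> a = b) \<Longrightarrow> finite A"
proof (cases "A = {}")
  case False
  assume h: "\<And>a b. a \<in> A \<Longrightarrow> b \<in> A \<Longrightarrow> a = b"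
  from False obtain a where "a \<in> A" by blast
  then have "A \<subseteq> {a}" using h by blast
  then show ?thesis using finite_subset by blast
qed simp

lemma emb_sep:
  fixes f :: "'q::linorder \<Rightarrow> real \<times> bool"
  assumes inj: "inj f" and mono: "\<And>a b. a \<le> b \<Longrightarrow> le_R0 (f a) (f b)"
    and two: "\<exists>a b::'q. a \<noteq> b"
  shows "separable_topology (order_topology_of :: 'q topology)"
proof -
  define \<phi> where "\<phi> = (\<lambda>q. fst (f q))"
  have m1: "\<phi> a \<le> \<phi> b" if "a \<le> b" for a b using mono[OF that] by (auto simp: le_R0_def \<phi>_def)
  have m2: "a < b" if "\<phi> a < \<phi> b" for a b using m1[of b a] that by (meson linorder_not_le)
  have p3: False if "x < y" "y < z" "\<phi> x = \<phi> y" "\<phi> y = \<phi> z" for x y z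
  proof -
    have "f x \<noteq> f y" "f y \<noteq> f z" "f x \<noteq> f z" using that inj by (auto simp: inj_eq)
    then have "snd (f x) \<noteq> snd (f y)" "snd (f y) \<noteq> snd (f z)" "snd (f x) \<noteq> snd (f z)"
      using that by (auto simp: \<phi>_def prod_eq_iff)
    then show False by auto
  qed
  define D2 where "D2 = {q. \<exists>q'. q < q' \<and> \<phi> q < \<phi> q' \<and> (\<forall>z. \<not>(q<z \<and> z<q'))}"
  define nxt where "nxt q = (SOME q'. q < q' \<and> \<phi> q < \<phi> q' \<and> (\<forall>z. \<not>(q<z \<and> z<q')))" for q
  have nxt: "q < nxt q \<and> \<phi> q < \<phi> (nxt q) \<and> (\<forall>z. \<not>(q<z \<and> z<nxt q))" if "q \<in> D2" for q
    using that unfolding D2_def nxt_def mem_Collect_eq by (rule someI_ex)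
  have nxt_unique: "q \<in> D2 \<and> nxt q = q'" if h: "q<q'" "\<phi> q < \<phi> q'" "\<forall>z. \<not>(q<z \<and> z<q')" for q q'
  proof -
    have "q \<in> D2" using h unfolding D2_def by blast
    moreover have "nxt q = q'" using nxt[OF \<open>q \<in> D2\<close>] h by (meson linorder_neqE)
    ultimately show ?thesis by blast
  qed
  define idx where "idx = {(r,s) | r s. r \<in> \<rat> \<and> s \<in> \<rat> \<and> r < s \<and> (\<exists>q. r < \<phi> q \<and> \<phi> q < s)}"
  define pick where "pick = (\<lambda>(r,s). SOME q. r < \<phi> q \<and> \<phi> q < s)"
  define D4 where "D4 = {q::'q. \<forall>y. q \<le> y} \<union> {q. \<forall>y. y \<le> q}"
  define D where "D = pick ` idx \<union> D2 \<union> nxt ` D2 \<union> D4"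
  have cD1: "countable (pick ` idx)"
  proof -
    have "idx \<subseteq> \<rat> \<times> \<rat>" unfolding idx_def by blast
    moreover have "countable (\<rat> \<times> (\<rat>::real set))" by (intro countable_SIGMA countable_rat)
    ultimately have "countable idx" using countable_subset by blast
    then show ?thesis by (rule countable_image)
  qed
  have cD2: "countable D2"
  proof -
    define rr where "rr q = (SOME r. r \<in> \<rat> \<and> \<phi> q < r \<and> r < \<phi> (nxt q))" for q
    have rr: "rr q \<in> \<rat> \<and> \<phi> q < rr q \<and> rr q < \<phi> (nxt q)" if "q \<in> D2" for q
    proof -
      have ex: "\<exists>r. r \<in> \<rat> \<and> \<phi> q < r \<and> r < \<phi> (nxt q)"
        using Rats_dense_in_real[of "\<phi> q" "\<phi> (nxt q)"] nxt[OF that] by blast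
      show ?thesis unfolding rr_def by (rule someI_ex[OF ex])
    qed
    have less: "rr q1 < rr q2" if "q1 \<in> D2" "q2 \<in> D2" "q1 < q2" for q1 q2
    proof -
      have "nxt q1 \<le> q2" using nxt[OF that(1)] that(3) by (meson linorder_not_le)
      then have "\<phi> (nxt q1) \<le> \<phi> q2" by (rule m1)
      then show ?thesis using rr[OF that(1)] rr[OF that(2)] by linarith
    qed
    have "inj_on rr D2"
    proof (rule inj_onI)
      fix x y assume "x \<in> D2" "y \<in> D2" "rr x = rr y"
      then show "x = y" using less[of x y] less[of y x] by (cases x y rule: linorder_cases) auto
    qed
    moreover have "rr ` D2 \<subseteq> \<rat>" using rr by blast
    then have "countable (rr ` D2)"
      using countable_rat countable_subset[of "rr ` D2" "\<rat>"] by simp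
    ultimately show ?thesis using countable_image_inj_on by blast
  qed
  have cD4: "countable D4"
  proof -
    have "finite {q::'q. \<forall>y. q \<le> y}" by (rule subsingleton_finite) (auto intro: order_antisym)
    moreover have "finite {q::'q. \<forall>y. y \<le> q}" by (rule subsingleton_finite) (auto intro: order_antisym)
    ultimately show ?thesis unfolding D4_def by (simp add: countable_finite)
  qed
  have cD: "countable D" unfolding D_def using cD1 cD2 cD4 by (simp add: countable_image)
  have K1: "\<exists>d\<in>D. u \<le> d \<and> d \<le> v" if uv: "u < v" "\<phi> u < \<phi> v" for u v
  proof (cases "\<exists>z. u < z \<and> z < v \<and> \<phi> u < \<phi> z \<and> \<phi> z < \<phi> v")
    case True
    then obtain z where z: "u < z" "z < v" "\<phi> u < \<phi> z" "\<phi> z < \<phi> v" by blast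
    obtain r where r: "r \<in> \<rat>" "\<phi> u < r" "r < \<phi> z" using Rats_dense_in_real[OF z(3)] by blast
    obtain s where s: "s \<in> \<rat>" "\<phi> z < s" "s < \<phi> v" using Rats_dense_in_real[OF z(4)] by blast
    have ex: "\<exists>q. r < \<phi> q \<and> \<phi> q < s" using r s by blast
    have "(r,s) \<in> idx" using r s ex unfolding idx_def by auto
    define w where "w = pick (r,s)"
    have w: "r < \<phi> w \<and> \<phi> w < s" unfolding w_def pick_def using someI_ex[OF ex] by simp
    then have "u < w" "w < v" using m2 r s by (meson less_trans)+
    moreover have "w \<in> D" unfolding D_def w_def using \<open>(r,s) \<in> idx\<close> by blast
    ultimately show ?thesis by (meson less_imp_le)
  next
    case False
    have mid: "\<phi> z = \<phi> u \<or> \<phi> z = \<phi> v" if "u<z" "z<v" for z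
      using False that m1[of u z] m1[of z v] by force
    define a where "a = (if \<exists>z. u<z \<and> z<v \<and> \<phi> z = \<phi> u then SOME z. u<z \<and> z<v \<and> \<phi> z = \<phi> u else u)"
    have a: "u \<le> a \<and> a < v \<and> \<phi> a = \<phi> u \<and> (\<forall>y. a<y \<and> y<v \<longrightarrow> \<phi> y \<noteq> \<phi> u)"
    proof (cases "\<exists>z. u<z \<and> z<v \<and> \<phi> z = \<phi> u")
      case True
      then have az: "u<a \<and> a<v \<and> \<phi> a = \<phi> u" unfolding a_def using someI_ex[OF True] by simp
      have "\<phi> y \<noteq> \<phi> u" if "a<y" "y<v" for y
        using p3[of u a y] az that by auto
      then show ?thesis using az by auto
    next
      case False
      then show ?thesis unfolding a_def using uv by auto
    qed
    define b where "b = (if \<exists>z. a<z \<and> z<v \<and> \<phi> z = \<phi> v then SOME z. a<z \<and> z<v \<and> \<phi> z = \<phi> v else v)"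
    have b: "a < b \<and> b \<le> v \<and> \<phi> b = \<phi> v \<and> (\<forall>y. a<y \<and> y<b \<longrightarrow> \<phi> y \<noteq> \<phi> v)"
    proof (cases "\<exists>z. a<z \<and> z<v \<and> \<phi> z = \<phi> v")
      case True
      then have bz: "a<b \<and> b<v \<and> \<phi> b = \<phi> v" unfolding b_def using someI_ex[OF True] by simp
      have "\<phi> y \<noteq> \<phi> v" if "a<y" "y<b" for y
        using p3[of y b v] bz that by auto
      then show ?thesis using bz by auto
    next
      case False
      then show ?thesis unfolding b_def using a by auto
    qed
    have empty: "\<forall>z. \<not>(a<z \<and> z<b)"
    proof (intro allI notI)
      fix z assume z: "a<z \<and> z<b"
      then have "u < z" "z < v" using a b by (meson le_less_trans less_le_trans)+
      then show False using mid[of z] a b z by blast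
    qed
    have "\<phi> a < \<phi> b" using a b uv by simp
    then have "a \<in> D2" using nxt_unique[of a b] a b empty by blast
    then show ?thesis unfolding D_def using a b by (meson UnI1 UnI2 less_imp_le less_le_trans)
  qed
  have conv: "z \<in> Iv Lo Hi" if "y \<in> Iv Lo Hi" "w \<in> Iv Lo Hi" "y \<le> z" "z \<le> w" for Lo Hi y z w
    using that unfolding Iv_def by (auto intro: less_le_trans le_less_trans)
  have K2: "\<exists>d\<in>D. d \<in> Iv Lo Hi" if fin: "finite Lo" "finite Hi" and x: "x \<in> Iv Lo Hi" for Lo Hi x
  proof (cases "\<exists>y\<in>Iv Lo Hi. \<phi> y \<noteq> \<phi> x")
    case True
    then obtain y where y: "y \<in> Iv Lo Hi" "\<phi> y \<noteq> \<phi> x" by blast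
    show ?thesis
    proof (cases "\<phi> y < \<phi> x")
      case True
      then obtain d where "d \<in> D" "y \<le> d" "d \<le> x" using K1[of y x] m2 by blast
      then show ?thesis using conv[OF y(1) x] by blast
    next
      case False
      then have "\<phi> x < \<phi> y" using y by linarith
      then obtain d where "d \<in> D" "x \<le> d" "d \<le> y" using K1[of x y] m2 by blast
      then show ?thesis using conv[OF x y(1)] by blast
    qed
  next
    case False
    then have allphi: "\<forall>y\<in>Iv Lo Hi. \<phi> y = \<phi> x" by blast
    obtain t where t: "t \<in> Iv Lo Hi" "\<forall>y\<in>Iv Lo Hi. y \<le> t"
    proof (cases "\<exists>y\<in>Iv Lo Hi. x < y")
      case True
      then obtain y where y: "y \<in> Iv Lo Hi" "x < y" by blast
      have "z \<le> y" if "z \<in> Iv Lo Hi" for z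
      proof (rule ccontr)
        assume "\<not> z \<le> y" then have "y < z" by simp
        moreover have "\<phi> y = \<phi> x" "\<phi> z = \<phi> x" using allphi that y by auto
        ultimately show False using p3[of x y z] y by simp
      qed
      then show ?thesis using that y by blast
    next
      case False
      then show ?thesis using that x by (meson linorder_not_le)
    qed
    obtain m where m: "m \<in> Iv Lo Hi" "\<forall>y\<in>Iv Lo Hi. m \<le> y"
    proof (cases "\<exists>y\<in>Iv Lo Hi. y < x")
      case True
      then obtain y where y: "y \<in> Iv Lo Hi" "y < x" by blast
      have "y \<le> z" if "z \<in> Iv Lo Hi" for z
      proof (rule ccontr)
        assume "\<not> y \<le> z" then have "z < y" by simp
        moreover have "\<phi> y = \<phi> x" "\<phi> z = \<phi> x" using allphi that y by auto
        ultimately show False using p3[of z y x] y by simp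
      qed
      then show ?thesis using that y by blast
    next
      case False
      then show ?thesis using that x by (meson linorder_not_le)
    qed
    show ?thesis
    proof (cases "Hi = {}")
      case True
      have "\<forall>y. y \<le> t"
      proof (rule ccontr)
        assume "\<not> (\<forall>y. y \<le> t)"
        then obtain y where "t < y" by (meson linorder_not_le)
        then have "y \<in> Iv Lo Hi" using t(1) True unfolding Iv_def by auto
        then show False using t(2) \<open>t < y\<close> by (meson linorder_not_le)
      qed
      then have "t \<in> D" unfolding D_def D4_def by blast
      then show ?thesis using t by blast
    next
      case HiNE: False
      define b where "b = Min Hi"
      have bHi: "b \<in> Hi" "\<And>h. h \<in> Hi \<Longrightarrow> b \<le> h" unfolding b_def using fin HiNE by auto
      have tb: "t < b" using t(1) bHi unfolding Iv_def by blast
      have empt: "\<forall>z. \<not>(t<z \<and> z<b)"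
      proof (intro allI notI)
        fix z assume z: "t<z \<and> z<b"
        then have "z \<in> Iv Lo Hi" using t(1) bHi unfolding Iv_def
          by (auto intro: less_trans less_le_trans)
        then show False using t(2) z by (meson linorder_not_le)
      qed
      show ?thesis
      proof (cases "\<phi> t < \<phi> b")
        case True
        then have "t \<in> D2" using nxt_unique[OF tb True empt] by blast
        then show ?thesis using t unfolding D_def by blast
      next
        case False
        then have ptb: "\<phi> t = \<phi> b" using m1[of t b] tb by simp
        show ?thesis
        proof (cases "Lo = {}")
          case True
          have "\<forall>y. m \<le> y"
          proof (rule ccontr)
            assume "\<not> (\<forall>y. m \<le> y)"
            then obtain y where "y < m" by (meson linorder_not_le)
            then have "y \<in> Iv Lo Hi" using m(1) True unfolding Iv_def by auto
            then show False using m(2) \<open>y < m\<close> by (meson linorder_not_le)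
          qed
          then have "m \<in> D" unfolding D_def D4_def by blast
          then show ?thesis using m by blast
        next
          case LoNE: False
          define a where "a = Max Lo"
          have aLo: "a \<in> Lo" "\<And>l. l \<in> Lo \<Longrightarrow> l \<le> a" unfolding a_def using fin LoNE by auto
          have am: "a < m" using m(1) aLo unfolding Iv_def by blast
          have empt2: "\<forall>z. \<not>(a<z \<and> z<m)"
          proof (intro allI notI)
            fix z assume z: "a<z \<and> z<m"
            then have "z \<in> Iv Lo Hi" using m(1) aLo unfolding Iv_def
              by (auto intro: less_trans le_less_trans)
            then show False using m(2) z by (meson linorder_not_le)
          qed
          show ?thesis
          proof (cases "\<phi> a < \<phi> m")
            case True
            then have "a \<in> D2 \<and> nxt a = m" using nxt_unique[OF am True empt2] by blast
            then have "m \<in> D" unfolding D_def by blast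
            then show ?thesis using m by blast
          next
            case False
            then have "\<phi> a = \<phi> m" using m1[of a m] am by simp
            moreover have "m < b" using m t tb by (meson le_less_trans)
            moreover have "\<phi> m = \<phi> b" using allphi m(1) t(1) ptb by simp
            ultimately show ?thesis using p3[of a m b] am by blast
          qed
        qed
      qed
    qed
  qed
  show ?thesis
    unfolding separable_topology_def
  proof (intro exI[of _ D] conjI allI impI)
    show "countable D" by (rule cD)
    show "D \<subseteq> topspace order_topology_of"
    proof
      fix q :: 'q
      obtain a where "a \<noteq> q" using two by metis
      then have "q < a \<or> a < q" by (meson linorder_neqE)
      then show "q \<in> topspace order_topology_of"
        unfolding order_topology_of_def topology_generated_by_topspace by blast
    qed
    fix U :: "'q set" assume U: "openin order_topology_of U \<and> U \<noteq> {}"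
    then obtain x where "x \<in> U" by blast
    have "generate_topology_on ({{q. q < a} | a. True} \<union> {{q. a < q} | a. True}) U"
      using U unfolding order_topology_of_def by (simp add: openin_topology_generated_by_iff)
    then obtain Lo Hi where "finite Lo" "finite Hi" "x \<in> Iv Lo Hi" "Iv Lo Hi \<subseteq> U"
      using K3 \<open>x \<in> U\<close> by blast
    then show "D \<inter> U \<noteq> {}" using K2 by blast
  qed
qed

lemma sep_emb:
  fixes q0 :: "'q::linorder"
  assumes least: "\<And>q. q0 \<le> q" and two: "\<exists>a b::'q. a \<noteq> b"
    and sep: "separable_topology (order_topology_of :: 'q topology)"
  shows "\<exists>f::'q \<Rightarrow> real\<times>bool. (\<forall>a b. a \<le> b \<longleftrightarrow> le_R0 (f a) (f b)) \<and> inj f \<and> f q0 = (0,False) \<and> (\<forall>q. fst (f q) \<ge> 0)"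
proof -
  obtain D where cD: "countable D" and DU: "\<And>U. openin (order_topology_of::'q topology) U \<Longrightarrow> U \<noteq> {} \<Longrightarrow> D \<inter> U \<noteq> {}"
    using sep unfolding separable_topology_def by blast
  have opn: "openin (order_topology_of::'q topology) {y. p < y \<and> y < q}" for p q
  proof -
    have "{y. p < y \<and> y < q} = {y. p < y} \<inter> {y. y < q}" by blast
    then show ?thesis unfolding order_topology_of_def openin_topology_generated_by_iff
      by (metis (mono_tags, lifting) UnI1 UnI2 generate_topology_on.Basis generate_topology_on.Int mem_Collect_eq)
  qed
  have opn2: "openin (order_topology_of::'q topology) {y. p < y}" for p
    unfolding order_topology_of_def by (rule topology_generated_by_Basis) blast
  obtain a1 where "q0 < a1" using two least by (metis order.not_eq_order_implies_strict)
  then have DNE: "D \<noteq> {}" using DU[OF opn2[of q0]] by blast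
  define e where "e = from_nat_into D"
  have rangee: "range e = D" unfolding e_def using DNE cD by simp
  define g where "g q n = (if e n < q then (1/2::real)^n else 0)" for q n
  have summ: "summable (g q)" for q
    by (rule summable_comparison_test'[where N=0, OF summable_geometric[of "1/2::real"]]) (auto simp: g_def)
  have gnn: "0 \<le> g q n" for q n by (simp add: g_def)
  define \<phi> where "\<phi> q = suminf (g q)" for q
  define \<beta> where "\<beta> q = (\<exists>p<q. \<forall>n. \<not>(p \<le> e n \<and> e n < q))" for q
  define f where "f q = (\<phi> q, \<beta> q)" for q
  have strict: "le_R0 (f q) (f q') \<and> f q \<noteq> f q'" if qq: "q < q'" for q q'
  proof (cases "\<exists>n. q \<le> e n \<and> e n < q'")
    case True
    then obtain n where n: "q \<le> e n" "e n < q'" by blast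
    have "\<phi> q' - \<phi> q = (\<Sum>m. g q' m - g q m)" unfolding \<phi>_def by (rule suminf_diff[OF summ summ])
    also have "\<dots> > 0"
    proof (rule suminf_pos2)
      show "summable (\<lambda>m. g q' m - g q m)" by (rule summable_diff[OF summ summ])
      show "0 \<le> g q' m - g q m" for m using qq by (auto simp: g_def)
      show "0 < g q' n - g q n" using n by (auto simp: g_def)
    qed
    finally have "\<phi> q < \<phi> q'" by simp
    then show ?thesis by (auto simp: f_def le_R0_def)
  next
    case False
    have "g q = g q'"
    proof
      fix m show "g q m = g q' m"
        using False qq by (auto simp: g_def intro: less_trans dest: spec[of _ m] simp: not_less)
    qed
    then have eq: "\<phi> q = \<phi> q'" by (simp add: \<phi>_def)
    have bq': "\<beta> q'" unfolding \<beta>_def using False qq by blast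
    have bq: "\<not> \<beta> q"
    proof
      assume "\<beta> q"
      then obtain p where p: "p < q" "\<forall>n. \<not>(p \<le> e n \<and> e n < q)" unfolding \<beta>_def by blast
      have "{y. p < y \<and> y < q'} \<noteq> {}" using p qq by blast
      then obtain d where "d \<in> D" "p < d" "d < q'" using DU[OF opn] by blast
      then obtain n where "e n = d" using rangee by blast
      then show False using p False \<open>p < d\<close> \<open>d < q'\<close> by (meson less_imp_le linorder_not_le)
    qed
    show ?thesis using eq bq bq' by (auto simp: f_def le_R0_def)
  qed
  have le_refl: "le_R0 x x" for x by (simp add: le_R0_def)
  have le_anti: "le_R0 x y \<Longrightarrow> le_R0 y x \<Longrightarrow> x = y" for x y by (auto simp: le_R0_def prod_eq_iff)
  have iff: "a \<le> b \<longleftrightarrow> le_R0 (f a) (f b)" for a b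
  proof
    assume "a \<le> b" then show "le_R0 (f a) (f b)" using strict le_refl by (cases "a = b") (auto simp: order.order_iff_strict)
  next
    assume h: "le_R0 (f a) (f b)"
    show "a \<le> b"
    proof (rule ccontr)
      assume "\<not> a \<le> b" then have "b < a" by simp
      then show False using strict[of b a] h le_anti by blast
    qed
  qed
  have "inj f"
  proof (rule injI)
    fix a b assume "f a = f b"
    then show "a = b" using strict[of a b] strict[of b a] by (cases a b rule: linorder_cases) auto
  qed
  moreover have "f q0 = (0, False)"
  proof -
    have "g q0 = (\<lambda>n. 0)" using least by (auto simp: g_def not_less)
    then have "\<phi> q0 = 0" by (simp add: \<phi>_def)
    moreover have "\<not> \<beta> q0" using least unfolding \<beta>_def by (meson linorder_not_le)
    ultimately show ?thesis by (simp add: f_def)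
  qed
  moreover have "fst (f q) \<ge> 0" for q unfolding f_def \<phi>_def using summ gnn by (simp add: suminf_nonneg)
  ultimately show ?thesis using iff by blast
qed

lemma sep_conds:
  fixes q0 :: "'q::linorder"
  assumes least: "\<And>q. q0 \<le> q" and two: "\<exists>a b::'q. a \<noteq> b"
    and sep: "separable_topology (order_topology_of :: 'q topology)"
  shows "cond_weak TYPE('x) TYPE('q) \<and> cond_comb TYPE('x) TYPE('q)"
proof -
  obtain f :: "'q \<Rightarrow> real\<times>bool" where iff: "\<And>a b. a \<le> b \<longleftrightarrow> le_R0 (f a) (f b)" and inj: "inj f"
    and f0: "f q0 = (0,False)" and fnn: "\<And>q. fst (f q) \<ge> 0"
    using sep_emb[OF least two sep] by blast
  have main: "\<exists>(Y::'x set) \<rho>. pseudoultrametric le_R0 R0 Y \<rho> \<and> weak_similar X d Y \<rho> \<and> comb_similar X d Y \<rho>"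
    if pu: "pseudoultrametric (\<le>) UNIV X d" for X :: "'x set" and d :: "'x \<Rightarrow> 'x \<Rightarrow> 'q"
  proof -
    define \<rho> where "\<rho> x y = f (d x y)" for x y
    have dxx: "d x x = q0" if "x \<in> X" for x using pu that least unfolding pseudoultrametric_def
      by (meson UNIV_I order_antisym)
    have fe: "(f a = f b) = (a = b)" for a b using inj by (simp add: inj_eq)
    have pu': "X \<noteq> {}" "\<And>x y. x \<in> X \<Longrightarrow> y \<in> X \<Longrightarrow> d x y = d y x"
      "\<And>x1 x2 x3. x1 \<in> X \<Longrightarrow> x2 \<in> X \<Longrightarrow> x3 \<in> X \<Longrightarrow>
        (d x1 x3 \<le> d x1 x2 \<and> d x1 x2 = d x2 x3) \<or>
        (d x1 x2 \<le> d x1 x3 \<and> d x1 x3 = d x3 x2) \<or>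
        (d x2 x3 \<le> d x2 x1 \<and> d x2 x1 = d x1 x3) \<or>
        (d x2 x1 \<le> d x2 x3 \<and> d x2 x3 = d x3 x1) \<or>
        (d x3 x2 \<le> d x3 x1 \<and> d x3 x1 = d x1 x2) \<or>
        (d x3 x1 \<le> d x3 x2 \<and> d x3 x2 = d x2 x1)"
      using pu unfolding pseudoultrametric_def by blast+
    have pr: "pseudoultrametric le_R0 R0 X \<rho>"
      unfolding pseudoultrametric_def
    proof (intro conjI ballI)
      show "X \<noteq> {}" by (rule pu'(1))
      show "\<rho> x y \<in> R0" for x y unfolding \<rho>_def R0_def using fnn by simp
      show "\<rho> x y = \<rho> y x" if "x \<in> X" "y \<in> X" for x y unfolding \<rho>_def using pu'(2)[OF that] by simp
      show "le_R0 (\<rho> x x) p" if "x \<in> X" "p \<in> R0" for x p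
        using that unfolding \<rho>_def dxx[OF that(1)] f0 by (auto simp: R0_def le_R0_def)
      fix x1 x2 x3 assume "x1 \<in> X" "x2 \<in> X" "x3 \<in> X"
      from pu'(3)[OF this] show "(le_R0 (\<rho> x1 x3) (\<rho> x1 x2) \<and> \<rho> x1 x2 = \<rho> x2 x3) \<or>
        (le_R0 (\<rho> x1 x2) (\<rho> x1 x3) \<and> \<rho> x1 x3 = \<rho> x3 x2) \<or>
        (le_R0 (\<rho> x2 x3) (\<rho> x2 x1) \<and> \<rho> x2 x1 = \<rho> x1 x3) \<or>
        (le_R0 (\<rho> x2 x1) (\<rho> x2 x3) \<and> \<rho> x2 x3 = \<rho> x3 x1) \<or>
        (le_R0 (\<rho> x3 x2) (\<rho> x3 x1) \<and> \<rho> x3 x1 = \<rho> x1 x2) \<or>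
        (le_R0 (\<rho> x3 x1) (\<rho> x3 x2) \<and> \<rho> x3 x2 = \<rho> x2 x1)"
        unfolding \<rho>_def iff[symmetric] fe .
    qed
    have img: "(\<lambda>(x, y). \<rho> x y) ` (X \<times> X) = f ` ((\<lambda>(x, y). d x y) ` (X \<times> X))"
      unfolding \<rho>_def by (simp add: image_image case_prod_unfold)
    have bij: "bij_betw f ((\<lambda>(x, y). d x y) ` (X \<times> X)) ((\<lambda>(x, y). \<rho> x y) ` (X \<times> X))"
      using img inj by (simp add: bij_betw_imageI inj_on_subset)
    have "weak_similar X d X \<rho>" unfolding weak_similar_def
      by (intro exI[of _ id] exI[of _ f]) (simp add: bij iff[symmetric] \<rho>_def)
    moreover have "comb_similar X d X \<rho>" unfolding comb_similar_def
      by (intro exI[of _ id] exI[of _ f]) (simp add: bij \<rho>_def)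
    ultimately show ?thesis using pr by blast
  qed
  show ?thesis unfolding cond_weak_def cond_comb_def using main by blast
qed

lemma weak_comb: "cond_weak TYPE('x) TYPE('q::linorder) \<Longrightarrow> cond_comb TYPE('x) TYPE('q)"
  unfolding cond_weak_def cond_comb_def weak_similar_def comb_similar_def by metis

lemma tri_max:
  fixes q0 :: "'q::linorder"
  assumes least: "\<And>q. q0 \<le> q"
  defines "DD \<equiv> (\<lambda>a b::'q. if a = b then q0 else max a b)"
  shows "(DD x1 x3 \<le> DD x1 x2 \<and> DD x1 x2 = DD x2 x3) \<or>
        (DD x1 x2 \<le> DD x1 x3 \<and> DD x1 x3 = DD x3 x2) \<or>
        (DD x2 x3 \<le> DD x2 x1 \<and> DD x2 x1 = DD x1 x3) \<or>
        (DD x2 x1 \<le> DD x2 x3 \<and> DD x2 x3 = DD x3 x1) \<or>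
        (DD x3 x2 \<le> DD x3 x1 \<and> DD x3 x1 = DD x1 x2) \<or>
        (DD x3 x1 \<le> DD x3 x2 \<and> DD x3 x2 = DD x2 x1)"
  unfolding DD_def using least
  by (cases "x1 = x2"; cases "x2 = x3"; cases "x1 = x3"; auto simp: max_def)

lemma comb_sep:
  fixes q0 :: "'q::linorder" and g :: "'q \<Rightarrow> 'x"
  assumes least: "\<And>q. q0 \<le> q" and two: "\<exists>a b::'q. a \<noteq> b"
    and g: "inj g" and cc: "cond_comb TYPE('x) TYPE('q)"
  shows "separable_topology (order_topology_of :: 'q topology)"
proof -
  define X where "X = range g"
  define d where "d x y = (if x = y then q0 else max (inv g x) (inv g y))" for x y
  have dg: "d (g a) (g b) = (if a = b then q0 else max a b)" for a b
    unfolding d_def using g by (simp add: inj_eq)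
  have "pseudoultrametric (\<le>) UNIV X d"
    unfolding pseudoultrametric_def
  proof (intro conjI ballI)
    show "X \<noteq> {}" unfolding X_def by simp
    show "d x y \<in> UNIV" for x y by simp
    show "d x y = d y x" for x y by (simp add: d_def max.commute)
    show "d x x \<le> p" for x p by (simp add: d_def least)
    fix x1 x2 x3 assume "x1 \<in> X" "x2 \<in> X" "x3 \<in> X"
    then obtain a1 a2 a3 where a: "x1 = g a1" "x2 = g a2" "x3 = g a3" unfolding X_def by blast
    show "d x1 x3 \<le> d x1 x2 \<and> d x1 x2 = d x2 x3 \<or>
        d x1 x2 \<le> d x1 x3 \<and> d x1 x3 = d x3 x2 \<or>
        d x2 x3 \<le> d x2 x1 \<and> d x2 x1 = d x1 x3 \<or>
        d x2 x1 \<le> d x2 x3 \<and> d x2 x3 = d x3 x1 \<or>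
        d x3 x2 \<le> d x3 x1 \<and> d x3 x1 = d x1 x2 \<or>
        d x3 x1 \<le> d x3 x2 \<and> d x3 x2 = d x2 x1"
      unfolding a dg using tri_max[OF least, of a1 a3 a2] by simp
  qed
  then obtain Y :: "'x set" and \<rho> where pr: "pseudoultrametric le_R0 R0 Y \<rho>" and cs: "comb_similar X d Y \<rho>"
    using cc unfolding cond_comb_def by blast
  then obtain h F where h: "bij_betw h X Y"
    and F: "bij_betw F ((\<lambda>(x, y). d x y) ` (X \<times> X)) ((\<lambda>(x, y). \<rho> x y) ` (Y \<times> Y))"
    and key: "\<And>x y. x \<in> X \<Longrightarrow> y \<in> X \<Longrightarrow> \<rho> (h x) (h y) = F (d x y)"
    unfolding comb_similar_def by blast
  have inA: "q \<in> (\<lambda>(x, y). d x y) ` (X \<times> X)" for q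
  proof -
    have "d (g q) (g q0) = q" unfolding dg using least by (simp add: max_def order_antisym)
    then show ?thesis unfolding X_def by (intro image_eqI[where x="(g q, g q0)"]) auto
  qed
  have injF: "inj F"
  proof (rule injI)
    fix a b assume "F a = F b"
    moreover have "inj_on F ((\<lambda>(x, y). d x y) ` (X \<times> X))" using F by (simp add: bij_betw_def)
    ultimately show "a = b" using inj_onD inA by metis
  qed
  have key': "\<rho> (h (g a)) (h (g b)) = F (if a = b then q0 else max a b)" for a b
    using key[of "g a" "g b"] unfolding X_def dg by simp
  have hY: "h (g a) \<in> Y" for a using bij_betw_apply[OF h] unfolding X_def by simp
  have pr': "\<And>x y. x \<in> Y \<Longrightarrow> y \<in> Y \<Longrightarrow> \<rho> x y \<in> R0"
    "\<And>x p. x \<in> Y \<Longrightarrow> p \<in> R0 \<Longrightarrow> le_R0 (\<rho> x x) p"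
    "\<And>x1 x2 x3. x1 \<in> Y \<Longrightarrow> x2 \<in> Y \<Longrightarrow> x3 \<in> Y \<Longrightarrow>
        (le_R0 (\<rho> x1 x3) (\<rho> x1 x2) \<and> \<rho> x1 x2 = \<rho> x2 x3) \<or>
        (le_R0 (\<rho> x1 x2) (\<rho> x1 x3) \<and> \<rho> x1 x3 = \<rho> x3 x2) \<or>
        (le_R0 (\<rho> x2 x3) (\<rho> x2 x1) \<and> \<rho> x2 x1 = \<rho> x1 x3) \<or>
        (le_R0 (\<rho> x2 x1) (\<rho> x2 x3) \<and> \<rho> x2 x3 = \<rho> x3 x1) \<or>
        (le_R0 (\<rho> x3 x2) (\<rho> x3 x1) \<and> \<rho> x3 x1 = \<rho> x1 x2) \<or>
        (le_R0 (\<rho> x3 x1) (\<rho> x3 x2) \<and> \<rho> x3 x2 = \<rho> x2 x1)"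
    using pr unfolding pseudoultrametric_def by blast+
  have mono: "le_R0 (F a) (F b)" if ab: "a \<le> b" for a b
  proof -
    consider "a = b" | "a = q0" "a < b" | "q0 < a" "a < b"
      using ab least by (metis order.not_eq_order_implies_strict)
    then show ?thesis
    proof cases
      case 1 then show ?thesis by (simp add: le_R0_def)
    next
      case 2
      have "F a = \<rho> (h (g q0)) (h (g q0))" using key'[of q0 q0] 2 by simp
      moreover have "F b = \<rho> (h (g b)) (h (g q0))" using key'[of b q0] 2 least
        by (simp add: max_absorb1 less_imp_le)
      ultimately show ?thesis using pr'(1,2) hY by simp
    next
      case 3
      have mx: "max q0 a = a" "max a q0 = a" "max q0 b = b" "max b q0 = b" "max a b = b" "max b a = b"
        "a \<noteq> q0" "q0 \<noteq> a" "b \<noteq> q0" "q0 \<noteq> b" "a \<noteq> b" "b \<noteq> a"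
        using 3 by (auto simp: max_def)
      have r12: "\<rho> (h (g q0)) (h (g a)) = F a" "\<rho> (h (g a)) (h (g q0)) = F a"
        using key'[of q0 a] key'[of a q0] mx by simp_all
      have r13: "\<rho> (h (g q0)) (h (g b)) = F b" "\<rho> (h (g b)) (h (g q0)) = F b"
        using key'[of q0 b] key'[of b q0] mx by simp_all
      have r23: "\<rho> (h (g a)) (h (g b)) = F b" "\<rho> (h (g b)) (h (g a)) = F b"
        using key'[of a b] key'[of b a] mx by simp_all
      have ne: "F a \<noteq> F b" using injF 3 by (auto simp: inj_eq)
      show ?thesis using pr'(3)[OF hY[of q0] hY[of a] hY[of b]] r12 r13 r23 ne by auto
    qed
  qed
  show ?thesis using emb_sep[OF injF mono two] .
qed

theorem theorem4p20:
  assumes "\<exists>q0::'q::linorder. \<forall>q. q0 \<le> q"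
    and "\<exists>a b::'q. a \<noteq> b"
  shows "(separable_topology (order_topology_of :: 'q topology) \<longrightarrow>
           cond_weak TYPE('x) TYPE('q) \<and> cond_comb TYPE('x) TYPE('q))
       \<and> ((\<exists>g::'q \<Rightarrow> 'x. inj g) \<longrightarrow>
           (separable_topology (order_topology_of :: 'q topology) \<longleftrightarrow> cond_weak TYPE('x) TYPE('q)) \<and>
           (separable_topology (order_topology_of :: 'q topology) \<longleftrightarrow> cond_comb TYPE('x) TYPE('q)))"
proof -
  obtain q0 :: 'q where least: "\<And>q. q0 \<le> q" using assms(1) by blast
  have 1: "separable_topology (order_topology_of :: 'q topology) \<Longrightarrow>
           cond_weak TYPE('x) TYPE('q) \<and> cond_comb TYPE('x) TYPE('q)"
    using sep_conds[OF least assms(2)] by blast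
  have 2: "cond_comb TYPE('x) TYPE('q) \<Longrightarrow> separable_topology (order_topology_of :: 'q topology)"
    if "inj (g :: 'q \<Rightarrow> 'x)" for g
    using comb_sep[OF least assms(2) that] by blast
  show ?thesis using 1 2 weak_comb[where 'x='x and 'q='q] by blast
qed

end
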